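(* Let $f:U\to\mathbb{R}^3$ be a Guichard net with Lamé coefficients $H_1,H_2,H_3$, let $h_1,h_2,h_3:U\to\mathbb{R}$ be functions satisfying $$\partial_xh_3=-\tfrac{H_2}{H_3}\kappa_{13},\quad \partial_yh_3=\tfrac{H_1}{H_3}\kappa_{23},\quad \partial_zh_3=-\tfrac{H_1H_2}{H_3^2}(\kappa_{31}-\kappa_{32}),\quad h_1=h_3+\tfrac{H_2}{H_1H_3},\quad h_2=h_3-\tfrac{H_1}{H_2H_3},$$ let $c\in\mathbb{R}$, and let $f^\star_c$ be the corresponding dual system, defined by $df^\star_c=\sum_{i=1}^3h^\star_i\,\partial_if\,dx_i$ with $h^\star_i=-(h_i+c)^2+\frac{\varepsilon_i}{H_i^2}$, $(\varepsilon_1,\varepsilon_2,\varepsilon_3)=(1,1,-1)$. Then $f^\star_c$ is again a Guichard net, i.e. its Lamé coefficients $H^\star_i=h^\star_iH_i$ satisfy $(H^\star_1)^2+(H^\star_2)^2-(H^\star_3)^2=0$.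
   Context: $U\subset\mathbb{R}^3$ open connected, coordinates $(x_1,x_2,x_3)=(x,y,z)$, $\partial_i=\partial_{x_i}$. A triply orthogonal system is $f:U\to\mathbb{R}^3$ with $\det(\partial_1f,\partial_2f,\partial_3f)\ne0$ and $(\partial_if,\partial_jf)=0$ for $i\ne j$. For $(i,j,k)$ a cyclic permutation of $(1,2,3)$, $N_i=\partial_jf\times\partial_kf/|\partial_jf\times\partial_kf|$, Lamé coefficients $H_i$ by $\partial_if=H_iN_i$, rotational coefficients $\beta_{ij}=\frac1{H_i}\partial_iH_j$, and $\kappa_{ij}=-\beta_{ij}/H_j$ is the principal curvature of the coordinate surface $x_i=\mathrm{const}$ along the $x_j$-lines. A Guichard net is a triply orthogonal system with $H_1^2+H_2^2-H_3^2=0$. A map $g$ with $dg=\sum_ik_i\partial_if\,dx_i$ (a Combescure transform of $f$) has Lamé coefficients $k_iH_i$ with respect to the same $N_i$. *)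

theory Defs
  imports "HOL-Analysis.Analysis" "HOL-Analysis.Cross3"
begin

text \<open>Coordinates on R^3 are indexed by the numeral type 3; the indices 1,2,3 of the
paper are (1::3), (2::3), (3::3) (the latter equals 0 in the ring type 3), so that
(i, i+1, i+2) runs through the cyclic permutations of (1,2,3).\<close>

definition partial :: "3 \<Rightarrow> (real^3 \<Rightarrow> 'b::real_normed_vector) \<Rightarrow> real^3 \<Rightarrow> 'b" where
  "partial i g x = vector_derivative (\<lambda>t. g (x + t *\<^sub>R axis i 1)) (at 0)"

definition has_partials_on :: "(real^3) set \<Rightarrow> (real^3 \<Rightarrow> 'b::real_normed_vector) \<Rightarrow> bool" where
  "has_partials_on U g \<longleftrightarrow> (\<forall>x\<in>U. \<forall>i. (\<lambda>t. g (x + t *\<^sub>R axis i 1)) differentiable (at 0))"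

definition iter_partial :: "3 list \<Rightarrow> (real^3 \<Rightarrow> 'b::real_normed_vector) \<Rightarrow> real^3 \<Rightarrow> 'b" where
  "iter_partial is g = foldr partial is g"

definition smooth_on3 :: "(real^3) set \<Rightarrow> (real^3 \<Rightarrow> 'b::real_normed_vector) \<Rightarrow> bool" where
  "smooth_on3 U g \<longleftrightarrow> (\<forall>is. has_partials_on U (iter_partial is g) \<and> continuous_on U (iter_partial is g))"

definition normal :: "(real^3 \<Rightarrow> real^3) \<Rightarrow> 3 \<Rightarrow> real^3 \<Rightarrow> real^3" where
  "normal f i x = (let c = cross3 (partial (i+1) f x) (partial (i+2) f x) in (1 / norm c) *\<^sub>R c)"

definition lame :: "(real^3 \<Rightarrow> real^3) \<Rightarrow> 3 \<Rightarrow> real^3 \<Rightarrow> real" where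
  "lame f i x = partial i f x \<bullet> normal f i x"

definition rot_coeff :: "(real^3 \<Rightarrow> real^3) \<Rightarrow> 3 \<Rightarrow> 3 \<Rightarrow> real^3 \<Rightarrow> real" where
  "rot_coeff f i j x = partial i (lame f j) x / lame f i x"

definition kappa :: "(real^3 \<Rightarrow> real^3) \<Rightarrow> 3 \<Rightarrow> 3 \<Rightarrow> real^3 \<Rightarrow> real" where
  "kappa f i j x = - rot_coeff f i j x / lame f j x"

definition triply_orthogonal :: "(real^3) set \<Rightarrow> (real^3 \<Rightarrow> real^3) \<Rightarrow> bool" where
  "triply_orthogonal U f \<longleftrightarrow> smooth_on3 U f \<and>
     (\<forall>x\<in>U. det (\<chi> i. partial i f x) \<noteq> 0 \<and>
             (\<forall>i j. i \<noteq> j \<longrightarrow> partial i f x \<bullet> partial j f x = 0))"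

definition guichard_net :: "(real^3) set \<Rightarrow> (real^3 \<Rightarrow> real^3) \<Rightarrow> bool" where
  "guichard_net U f \<longleftrightarrow> triply_orthogonal U f \<and>
     (\<forall>x\<in>U. (lame f 1 x)\<^sup>2 + (lame f 2 x)\<^sup>2 - (lame f 3 x)\<^sup>2 = 0)"

definition eps :: "3 \<Rightarrow> real" where
  "eps i = (if i = 3 then -1 else 1)"

end

theory Submission
  imports Defs
begin

lemma par_cross:
  fixes v a b :: "real^3"
  assumes "v \<bullet> a = 0" "v \<bullet> b = 0"
  shows "(cross3 a b \<bullet> cross3 a b) *\<^sub>R v = (v \<bullet> cross3 a b) *\<^sub>R cross3 a b"
proof -
  have "cross3 v (cross3 a b) = (v \<bullet> b) *\<^sub>R a - (v \<bullet> a) *\<^sub>R b"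
    unfolding vec_eq_iff forall_3 by (simp add: cross3_def inner_vec_def sum_3 algebra_simps)
  hence z: "cross3 v (cross3 a b) = 0" using assms by simp
  have "cross3 (cross3 a b) (cross3 v (cross3 a b)) = (cross3 a b \<bullet> cross3 a b) *\<^sub>R v - (v \<bullet> cross3 a b) *\<^sub>R cross3 a b"
    unfolding vec_eq_iff forall_3 by (simp add: cross3_def inner_vec_def sum_3 algebra_simps)
  with z show ?thesis by simp
qed

lemma triple_cyc: fixes a b c :: "real^3" shows "a \<bullet> cross3 b c = b \<bullet> cross3 c a"
  by (simp add: cross3_simps)

lemma det_rows: fixes F :: "3 \<Rightarrow> real^3"
  shows "det (\<chi> i. F i) = F 1 \<bullet> cross3 (F 2) (F 3)"
proof -
  have "(\<chi> i. F i) = vector [F 1, F 2, F 3]"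
    unfolding vec_eq_iff by (metis (mono_tags) exhaust_3 vector_3 vec_lambda_beta)
  thus ?thesis by (simp add: dot_cross_det)
qed

lemma det_rows_i: fixes F :: "3 \<Rightarrow> real^3"
  shows "det (\<chi> i. F i) = F i \<bullet> cross3 (F (i+1)) (F (i+2))"
proof -
  have a: "(2::3) + 1 = 3" "(3::3) + 1 = 1" "(3::3)+2 = 2" "(2::3)+2 = 1" "(1::3)+1 = 2" "(1::3)+2 = 3" "(4::3) = 1" by simp_all
  consider "i = 1" | "i = 2" | "i = 3" using exhaust_3 by blast
  then show ?thesis
  proof cases
    case 1 then show ?thesis using det_rows[of F] a by simp
  next
    case 2
    have "F i \<bullet> cross3 (F (i+1)) (F (i+2)) = F 2 \<bullet> cross3 (F 3) (F 1)" using 2 a by (simp only:)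
    then show ?thesis using det_rows[of F] triple_cyc[of "F 1" "F 2" "F 3"] by simp
  next
    case 3
    have "F i \<bullet> cross3 (F (i+1)) (F (i+2)) = F 3 \<bullet> cross3 (F 1) (F 2)" using 3 a by (simp only:)
    then show ?thesis using det_rows[of F] triple_cyc[of "F 2" "F 3" "F 1"] triple_cyc[of "F 1" "F 2" "F 3"] by simp
  qed
qed

lemma ne_succ: "(i::3) \<noteq> i + 1" "(i::3) \<noteq> i + 2"
  using exhaust_3[of i] by auto

lemma lame_facts:
  assumes T: "triply_orthogonal U f" and x: "x \<in> U"
  shows "lame f i x \<noteq> 0 \<and> partial i f x = lame f i x *\<^sub>R normal f i x"
proof -
  define v a b where "v = partial i f x" and "a = partial (i+1) f x" and "b = partial (i+2) f x"
  define c where "c = cross3 a b"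
  have d: "det (\<chi> i. partial i f x) \<noteq> 0" and o: "\<And>i j. i \<noteq> j \<Longrightarrow> partial i f x \<bullet> partial j f x = 0"
    using T x unfolding triply_orthogonal_def by auto
  have vc: "v \<bullet> c \<noteq> 0" using d det_rows_i[of "\<lambda>i. partial i f x" i] unfolding v_def c_def a_def b_def by simp
  hence c0: "c \<noteq> 0" by auto
  have va: "v \<bullet> a = 0" "v \<bullet> b = 0" using o ne_succ unfolding v_def a_def b_def by auto
  have pc: "(c \<bullet> c) *\<^sub>R v = (v \<bullet> c) *\<^sub>R c" using par_cross[OF va] unfolding c_def .
  have nc: "norm c > 0" using c0 by simp
  have cc: "c \<bullet> c = (norm c)^2" by (simp add: power2_norm_eq_inner)
  have L: "lame f i x = (v \<bullet> c) / norm c"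
    unfolding lame_def normal_def Let_def v_def[symmetric] a_def[symmetric] b_def[symmetric] c_def[symmetric]
    by (simp add: inner_commute)
  have N: "normal f i x = (1 / norm c) *\<^sub>R c"
    unfolding normal_def Let_def a_def[symmetric] b_def[symmetric] c_def[symmetric] by simp
  have "v = ((v \<bullet> c) / (c \<bullet> c)) *\<^sub>R c" using pc nc cc
    by (metis (no_types, lifting) c0 divide_inverse_commute inner_eq_zero_iff scaleR_scaleR scaleR_one right_inverse)
  also have "\<dots> = lame f i x *\<^sub>R normal f i x" using L N cc nc by (simp add: power2_eq_square)
  finally show ?thesis using L vc nc v_def by simp
qed

theorem proposition4p4:
  fixes U :: "(real^3) set" and f g :: "real^3 \<Rightarrow> real^3"
    and h :: "3 \<Rightarrow> real^3 \<Rightarrow> real" and c :: real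
  assumes U: "open U" "connected U"
    and G: "guichard_net U f"
    and h3_diff: "has_partials_on U (h 3)"
    and h3_x: "\<forall>x\<in>U. partial 1 (h 3) x = - lame f 2 x / lame f 3 x * kappa f 1 3 x"
    and h3_y: "\<forall>x\<in>U. partial 2 (h 3) x = lame f 1 x / lame f 3 x * kappa f 2 3 x"
    and h3_z: "\<forall>x\<in>U. partial 3 (h 3) x =
                 - (lame f 1 x * lame f 2 x) / (lame f 3 x)\<^sup>2 * (kappa f 3 1 x - kappa f 3 2 x)"
    and h1: "\<forall>x\<in>U. h 1 x = h 3 x + lame f 2 x / (lame f 1 x * lame f 3 x)"
    and h2: "\<forall>x\<in>U. h 2 x = h 3 x - lame f 1 x / (lame f 2 x * lame f 3 x)"
    and dual: "\<forall>x\<in>U. (g has_derivative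
                 (\<lambda>v. \<Sum>i\<in>UNIV. (v $ i * (- (h i x + c)\<^sup>2 + eps i / (lame f i x)\<^sup>2)) *\<^sub>R partial i f x))
                 (at x)"
  shows "\<forall>x\<in>U.
           (\<forall>i. partial i g x =
                  ((- (h i x + c)\<^sup>2 + eps i / (lame f i x)\<^sup>2) * lame f i x) *\<^sub>R normal f i x) \<and>
           ((- (h 1 x + c)\<^sup>2 + eps 1 / (lame f 1 x)\<^sup>2) * lame f 1 x)\<^sup>2
         + ((- (h 2 x + c)\<^sup>2 + eps 2 / (lame f 2 x)\<^sup>2) * lame f 2 x)\<^sup>2
         - ((- (h 3 x + c)\<^sup>2 + eps 3 / (lame f 3 x)\<^sup>2) * lame f 3 x)\<^sup>2 = 0"
proof
  fix x assume x: "x \<in> U"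
  have T: "triply_orthogonal U f" using G unfolding guichard_net_def by simp
  have gu: "(lame f 1 x)\<^sup>2 + (lame f 2 x)\<^sup>2 - (lame f 3 x)\<^sup>2 = 0" using G x unfolding guichard_net_def by simp
  have LF: "\<And>i. lame f i x \<noteq> 0 \<and> partial i f x = lame f i x *\<^sub>R normal f i x" using lame_facts[OF T x] by blast
  define s where "s i = - (h i x + c)\<^sup>2 + eps i / (lame f i x)\<^sup>2" for i
  have gd: "(g has_derivative (\<lambda>v. \<Sum>i\<in>UNIV. (v $ i * s i) *\<^sub>R partial i f x)) (at x)"
    using dual x unfolding s_def by simp
  have P: "partial i g x = (s i * lame f i x) *\<^sub>R normal f i x" for i
  proof -
    have l: "((\<lambda>t. x + t *\<^sub>R axis i 1) has_derivative (\<lambda>t. t *\<^sub>R axis i 1)) (at 0)"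
      by (auto intro!: derivative_eq_intros)
    have gd0: "(g has_derivative (\<lambda>v. \<Sum>i\<in>UNIV. (v $ i * s i) *\<^sub>R partial i f x)) (at (x + (0::real) *\<^sub>R axis i 1))"
      using gd by simp
    have sm: "(\<Sum>j\<in>UNIV. ((t *\<^sub>R axis i 1) $ j * s j) *\<^sub>R partial j f x) = t *\<^sub>R (s i *\<^sub>R partial i f x)" for t
    proof -
      have "(\<Sum>j\<in>UNIV. ((t *\<^sub>R axis i 1) $ j * s j) *\<^sub>R partial j f x)
          = (\<Sum>j\<in>UNIV. if j = i then t *\<^sub>R (s i *\<^sub>R partial i f x) else 0)"
        by (rule sum.cong) (auto simp: axis_def)
      also have "\<dots> = t *\<^sub>R (s i *\<^sub>R partial i f x)" by simp
      finally show ?thesis .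
    qed
    have "((\<lambda>t. g (x + t *\<^sub>R axis i 1)) has_derivative (\<lambda>t. t *\<^sub>R (s i *\<^sub>R partial i f x))) (at 0)"
      using diff_chain_at[OF l gd0] unfolding o_def sm .
    hence "((\<lambda>t. g (x + t *\<^sub>R axis i 1)) has_vector_derivative (s i *\<^sub>R partial i f x)) (at 0)"
      unfolding has_vector_derivative_def .
    hence "partial i g x = s i *\<^sub>R partial i f x"
      unfolding partial_def by (rule vector_derivative_at)
    also have "\<dots> = (s i * lame f i x) *\<^sub>R normal f i x" using LF[of i] by simp
    finally show ?thesis .
  qed
  have A: "(s 1 * lame f 1 x)\<^sup>2 + (s 2 * lame f 2 x)\<^sup>2 - (s 3 * lame f 3 x)\<^sup>2 = 0"
  proof -
    define a where "a = h 3 x + c"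
    define H1 H2 H3 where "H1 = lame f 1 x" and "H2 = lame f 2 x" and "H3 = lame f 3 x"
    have n: "H1 \<noteq> 0" "H2 \<noteq> 0" "H3 \<noteq> 0" using LF unfolding H1_def H2_def H3_def by auto
    have g3: "H3^2 = H1^2 + H2^2" using gu unfolding H1_def H2_def H3_def by simp
    have e: "eps 1 = 1" "eps 2 = 1" "eps 3 = -1" unfolding eps_def by simp_all
    have s1: "s 1 * H1 = H1 * (1/H3^2 - a^2) - 2*a*H2/H3"
    proof -
      have "s 1 * H1 = 1/H1 - H1*a^2 - 2*a*H2/H3 - H2^2/(H1*H3^2)"
        proof -
          have hx: "h 1 x + c = a + H2/(H1*H3)" using h1 x unfolding a_def H1_def H2_def H3_def by simp
          show ?thesis unfolding s_def hx unfolding H1_def[symmetric] H2_def[symmetric] H3_def[symmetric] e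
            using n by (simp add: field_simps power2_eq_square)
        qed
      moreover have "1/H1 - H2^2/(H1*H3^2) = H1/H3^2"
      proof -
        have "1/H1 - H2^2/(H1*H3^2) = (H3^2 - H2^2)/(H1*H3^2)" using n by (simp add: field_simps)
        also have "\<dots> = H1^2/(H1*H3^2)" using g3 by simp
        also have "\<dots> = H1/H3^2" using n by (simp add: power2_eq_square)
        finally show ?thesis .
      qed
      ultimately show ?thesis by (simp add: algebra_simps)
    qed
    have s2: "s 2 * H2 = H2 * (1/H3^2 - a^2) + 2*a*H1/H3"
    proof -
      have "s 2 * H2 = 1/H2 - H2*a^2 + 2*a*H1/H3 - H1^2/(H2*H3^2)"
        proof -
          have hx: "h 2 x + c = a - H1/(H2*H3)" using h2 x unfolding a_def H1_def H2_def H3_def by simp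
          show ?thesis unfolding s_def hx unfolding H1_def[symmetric] H2_def[symmetric] H3_def[symmetric] e
            using n by (simp add: field_simps power2_eq_square)
        qed
      moreover have "1/H2 - H1^2/(H2*H3^2) = H2/H3^2"
      proof -
        have "1/H2 - H1^2/(H2*H3^2) = (H3^2 - H1^2)/(H2*H3^2)" using n by (simp add: field_simps)
        also have "\<dots> = H2^2/(H2*H3^2)" using g3 by simp
        also have "\<dots> = H2/H3^2" using n by (simp add: power2_eq_square)
        finally show ?thesis .
      qed
      ultimately show ?thesis by (simp add: algebra_simps)
    qed
    have s3: "s 3 * H3 = - H3 * (a^2 + 1/H3^2)"
      unfolding s_def a_def H3_def e by (simp add: algebra_simps)
    have "(H1 * (1/H3^2 - a^2) - 2*a*H2/H3)^2 + (H2 * (1/H3^2 - a^2) + 2*a*H1/H3)^2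
          = (H1^2+H2^2) * ((1/H3^2 - a^2)^2 + 4*a^2/H3^2)"
      using n by (simp add: field_simps power2_eq_square)
    also have "\<dots> = H3^2 * ((1/H3^2 - a^2)^2 + 4*a^2/H3^2)" using g3 by simp
    also have "\<dots> = (- H3 * (a^2 + 1/H3^2))^2" using n by (simp add: field_simps power2_eq_square)
    finally show ?thesis using s1 s2 s3 unfolding H1_def H2_def H3_def by simp
  qed
  show "(\<forall>i. partial i g x =
                  ((- (h i x + c)\<^sup>2 + eps i / (lame f i x)\<^sup>2) * lame f i x) *\<^sub>R normal f i x) \<and>
           ((- (h 1 x + c)\<^sup>2 + eps 1 / (lame f 1 x)\<^sup>2) * lame f 1 x)\<^sup>2
         + ((- (h 2 x + c)\<^sup>2 + eps 2 / (lame f 2 x)\<^sup>2) * lame f 2 x)\<^sup>2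
         - ((- (h 3 x + c)\<^sup>2 + eps 3 / (lame f 3 x)\<^sup>2) * lame f 3 x)\<^sup>2 = 0"
    using P A unfolding s_def by simp
qed

end
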